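(* If $q\ge 7$ is an integer, then the achromatic number of $K_6\square K_q$ is at most $2q+7$.
   Context: For a finite simple graph $G$ and a finite colour set $C$, a vertex colouring $f:V(G)\to C$ is complete if for any two distinct colours $c_1,c_2\in C$ there is an edge $v_1v_2\in E(G)$ with $f(v_i)=c_i$, $i=1,2$. The achromatic number of $G$ is the maximum number of colours in a proper complete vertex colouring of $G$. The Cartesian product $G_1\square G_2$ has vertex set $V(G_1)\times V(G_2)$, with $(u_1,u_2)$ adjacent to $(w_1,w_2)$ iff either $u_1w_1\in E(G_1)$ and $u_2=w_2$, or $u_2w_2\in E(G_2)$ and $u_1=w_1$. *)

theory Defs
  imports Main
begin

definition simple_graph :: "'a set \<Rightarrow> 'a set set \<Rightarrow> bool" where
  "simple_graph V E \<longleftrightarrow> finite V \<and> (\<forall>e\<in>E. e \<subseteq> V \<and> card e = 2)"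

definition proper_colouring :: "'a set \<Rightarrow> 'a set set \<Rightarrow> ('a \<Rightarrow> 'c) \<Rightarrow> 'c set \<Rightarrow> bool" where
  "proper_colouring V E f C \<longleftrightarrow> f ` V \<subseteq> C \<and> (\<forall>u\<in>V. \<forall>v\<in>V. {u, v} \<in> E \<longrightarrow> f u \<noteq> f v)"

definition complete_colouring :: "'a set \<Rightarrow> 'a set set \<Rightarrow> ('a \<Rightarrow> 'c) \<Rightarrow> 'c set \<Rightarrow> bool" where
  "complete_colouring V E f C \<longleftrightarrow> f ` V \<subseteq> C \<and>
     (\<forall>c1\<in>C. \<forall>c2\<in>C. c1 \<noteq> c2 \<longrightarrow> (\<exists>v1\<in>V. \<exists>v2\<in>V. {v1, v2} \<in> E \<and> f v1 = c1 \<and> f v2 = c2))"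

text \<open>Achromatic number: maximum number of colours (size of a finite colour set,
  taken as a set of naturals w.l.o.g.) in a proper complete colouring.\<close>
definition achromatic_number :: "'a set \<Rightarrow> 'a set set \<Rightarrow> nat" where
  "achromatic_number V E = (GREATEST k. \<exists>(f :: 'a \<Rightarrow> nat) C. finite C \<and> card C = k \<and>
       proper_colouring V E f C \<and> complete_colouring V E f C)"

definition K_vertices :: "nat \<Rightarrow> nat set" where
  "K_vertices n = {0..<n}"
definition K_edges :: "nat \<Rightarrow> nat set set" where
  "K_edges n = {{u, v} | u v. u < n \<and> v < n \<and> u \<noteq> v}"

definition cart_vertices :: "'a set \<Rightarrow> 'b set \<Rightarrow> ('a \<times> 'b) set" where
  "cart_vertices V1 V2 = V1 \<times> V2"
definition cart_edges :: "'a set \<Rightarrow> 'a set set \<Rightarrow> 'b set \<Rightarrow> 'b set set \<Rightarrow> ('a \<times> 'b) set set" where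
  "cart_edges V1 E1 V2 E2 =
     {{(u1, u2), (w1, w2)} | u1 u2 w1 w2.
        u1 \<in> V1 \<and> w1 \<in> V1 \<and> u2 \<in> V2 \<and> w2 \<in> V2 \<and>
        (({u1, w1} \<in> E1 \<and> u2 = w2) \<or> ({u2, w2} \<in> E2 \<and> u1 = w1))}"

end

theory Submission
  imports Defs
begin

lemma edge_char:
  "{(a1::nat,a2::nat),(b1,b2)} \<in> cart_edges (K_vertices 6) (K_edges 6) (K_vertices q) (K_edges q)
   \<longleftrightarrow> a1<6 \<and> b1<6 \<and> a2<q \<and> b2<q \<and> ((a1\<noteq>b1 \<and> a2=b2) \<or> (a2\<noteq>b2 \<and> a1=b1))"
  unfolding cart_edges_def K_edges_def K_vertices_def
  apply (rule iffI)
   apply (auto simp: doubleton_eq_iff)[1]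
  apply (elim conjE disjE)
   apply (rule CollectI, rule exI[of _ a1], rule exI[of _ a2], rule exI[of _ b1], rule exI[of _ b2], force)
  apply (rule CollectI, rule exI[of _ a1], rule exI[of _ a2], rule exI[of _ b1], rule exI[of _ b2], force)
  done

lemma edge_char':
  "{a,b} \<in> cart_edges (K_vertices 6) (K_edges 6) (K_vertices q) (K_edges q)
   \<longleftrightarrow> fst a<6 \<and> fst b<6 \<and> snd a<q \<and> snd b<q \<and> ((fst a\<noteq>fst b \<and> snd a=snd b) \<or> (snd a\<noteq>snd b \<and> fst a=fst b))"
  using edge_char[of "fst a" "snd a" "fst b" "snd b" q] by simp

lemma card_R:
  fixes I J :: "nat set"
  assumes "I \<subseteq> {0..<6}" "finite J"
  shows "card (I \<times> {0..<q} \<union> ({0..<6} - I) \<times> J) \<le> card I * q + (6 - card I) * card J"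
proof -
  have fI: "finite I" using assms finite_subset by blast
  have "card (I \<times> {0..<q} \<union> ({0..<6} - I) \<times> J) \<le> card (I \<times> {0..<q}) + card (({0..<6} - I) \<times> J)"
    by (rule card_Un_le)
  also have "\<dots> = card I * q + card ({0..<6::nat} - I) * card J"
    by (simp add: card_cartesian_product)
  also have "card ({0..<6::nat} - I) = 6 - card I"
    using assms fI by (simp add: card_Diff_subset)
  finally show ?thesis .
qed

lemma class_bound:
  fixes q :: nat and f :: "nat \<times> nat \<Rightarrow> nat" and C :: "nat set"
  defines "V \<equiv> cart_vertices (K_vertices 6) (K_vertices q)"
  defines "E \<equiv> cart_edges (K_vertices 6) (K_edges 6) (K_vertices q) (K_edges q)"
  assumes fin: "finite C" and pr: "proper_colouring V E f C" and co: "complete_colouring V E f C"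
    and big: "card C \<ge> 2*q+8" and c: "c \<in> C"
  shows "3 \<le> card {v\<in>V. f v = c}"
proof (rule ccontr)
  assume "\<not> 3 \<le> card {v\<in>V. f v = c}"
  hence le2: "card {v\<in>V. f v = c} \<le> 2" by simp
  let ?A = "{v\<in>V. f v = c}"
  have finV: "finite V" unfolding V_def cart_vertices_def K_vertices_def by simp
  have nbr: "\<forall>c'\<in>C - {c}. \<exists>v1\<in>?A. \<exists>v2\<in>V. {v1,v2} \<in> E \<and> f v2 = c'"
    using co c unfolding complete_colouring_def by fastforce
  have adjv: "v2 \<in> ({fst v1} \<times> {0..<q} \<union> {0..<6} \<times> {snd v1}) - {v1}" if "{v1,v2} \<in> E" for v1 v2
    using that unfolding E_def edge_char' by (cases v1; cases v2; auto)
  obtain c' where "c' \<in> C - {c}"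
  proof -
    have "card (C - {c}) = card C - 1" using c fin by simp
    hence "card (C - {c}) \<noteq> 0" using big by simp
    hence "C - {c} \<noteq> {}" by (metis card.empty)
    thus ?thesis using that by blast
  qed
  then obtain a where aA: "a \<in> ?A" using nbr by blast
  have finA: "finite ?A" using finV by simp
  have "\<exists>N. finite N \<and> card N \<le> 2*q+6 \<and> (\<forall>v1\<in>?A. \<forall>v2. {v1,v2} \<in> E \<longrightarrow> v2 \<in> N)"
  proof (cases "?A = {a}")
    case True
    let ?R = "{fst a} \<times> {0..<q} \<union> ({0..<6} - {fst a}) \<times> {snd a}"
    have a6: "fst a < 6" "snd a < q" using aA unfolding V_def cart_vertices_def K_vertices_def by auto
    have "card ?R \<le> 1 * q + (6 - 1) * 1"
      using card_R[of "{fst a}" "{snd a}" q] a6 by simp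
    moreover have "a \<in> ?R" using a6 by (cases a) auto
    moreover have "finite ?R" by simp
    ultimately have "card (?R - {a}) \<le> 2*q+6" by (simp add: card_Diff_singleton)
    moreover have "\<forall>v1\<in>?A. \<forall>v2. {v1,v2} \<in> E \<longrightarrow> v2 \<in> ?R - {a}"
    proof (intro ballI allI impI)
      fix v1 v2 assume "v1 \<in> ?A" "{v1,v2} \<in> E"
      hence "v1 = a" "v2 \<in> ({fst v1} \<times> {0..<q} \<union> {0..<6} \<times> {snd v1}) - {v1}"
        using True adjv by blast+
      thus "v2 \<in> ?R - {a}" by auto
    qed
    ultimately show ?thesis by (intro exI[of _ "?R - {a}"]) auto
  next
    case False
    then obtain b where bA: "b \<in> ?A" "b \<noteq> a" using aA by blast
    have Aab: "?A = {a,b}"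
    proof -
      have "{a,b} \<subseteq> ?A" using aA bA by auto
      moreover have "card {a,b} = 2" using bA by simp
      ultimately show ?thesis using le2 finA
        by (metis card_seteq)
    qed
    have a6: "fst a < 6" "snd a < q" "fst b < 6" "snd b < q"
      using aA bA unfolding V_def cart_vertices_def K_vertices_def by auto
    have prp: "\<forall>u\<in>V. \<forall>v\<in>V. {u,v} \<in> E \<longrightarrow> f u \<noteq> f v" using pr unfolding proper_colouring_def by blast
    have "a \<in> V" "b \<in> V" "f a = c" "f b = c" using aA bA by auto
    hence "{a,b} \<notin> E" using prp by metis
    hence ne: "\<not>((fst a\<noteq>fst b \<and> snd a=snd b) \<or> (snd a\<noteq>snd b \<and> fst a=fst b))"
      using a6 unfolding E_def edge_char' by blast
    have diff: "fst a \<noteq> fst b" "snd a \<noteq> snd b" using ne bA(2) prod_eqI by blast+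
    let ?R = "{fst a, fst b} \<times> {0..<q} \<union> ({0..<6} - {fst a, fst b}) \<times> {snd a, snd b}"
    have "card ?R \<le> card {fst a, fst b} * q + (6 - card {fst a, fst b}) * card {snd a, snd b}"
      using card_R[of "{fst a, fst b}" "{snd a, snd b}" q] a6 by simp
    also have "\<dots> = 2*q + 8" using diff by simp
    finally have cR: "card ?R \<le> 2*q+8" .
    have "{a,b} \<subseteq> ?R" using a6 by (cases a; cases b) auto
    moreover have "finite ?R" by simp
    ultimately have "card (?R - {a,b}) \<le> 2*q+6" using cR bA(2)
      by (simp add: card_Diff_subset)
    moreover have "\<forall>v1\<in>?A. \<forall>v2. {v1,v2} \<in> E \<longrightarrow> v2 \<in> ?R - {a,b}"
    proof (intro ballI allI impI)
      fix v1 v2 assume v1: "v1 \<in> ?A" and e: "{v1,v2} \<in> E"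
      have "v1 = a \<or> v1 = b" using v1 Aab by blast
      have "v2 \<notin> ?A"
      proof
        assume "v2 \<in> ?A"
        then show False using prp v1 e by auto
      qed
      hence nab: "v2 \<notin> {a,b}" using Aab by simp
      have "fst v1 \<in> {fst a, fst b}" "snd v1 \<in> {snd a, snd b}" using \<open>v1 = a \<or> v1 = b\<close> by auto
      moreover have "v2 \<in> {fst v1} \<times> {0..<q} \<union> {0..<6} \<times> {snd v1}" using adjv[OF e] by blast
      ultimately have "v2 \<in> ?R" using a6 by (cases v2) auto
      thus "v2 \<in> ?R - {a,b}" using nab by blast
    qed
    ultimately show ?thesis by (intro exI[of _ "?R - {a,b}"]) auto
  qed
  then obtain N where N: "finite N" "card N \<le> 2*q+6" "\<forall>v1\<in>?A. \<forall>v2. {v1,v2} \<in> E \<longrightarrow> v2 \<in> N"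
    by blast
  have "C - {c} \<subseteq> f ` N"
  proof
    fix c' assume "c' \<in> C - {c}"
    then obtain v1 v2 where "v1 \<in> ?A" "{v1,v2} \<in> E" "f v2 = c'" using nbr by blast
    thus "c' \<in> f ` N" using N(3) by blast
  qed
  hence "card (C - {c}) \<le> card N" using N(1)
    by (meson card_image_le card_mono finite_imageI le_trans)
  moreover have "card (C - {c}) = card C - 1" using c fin by simp
  ultimately show False using N(2) big by simp
qed

lemma mod_cancel_aux:
  fixes a b c q :: nat
  assumes "a < q" "b < q" "(a + c) mod q = (b + c) mod q"
  shows "a = b"
proof -
  have key: "x = y" if "x \<le> y" "x < q" "y < q" "(x + c) mod q = (y + c) mod q" for x y :: nat
  proof -
    have "q dvd (y + c) - (x + c)" using that mod_eq_dvd_iff_nat[of "x+c" "y+c" q] by simp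
    hence "q dvd y - x" by simp
    moreover have "y - x < q" using that by simp
    ultimately have "y - x = 0" using dvd_imp_le[of q "y - x"] by (cases "y - x = 0") auto
    thus ?thesis using that(1) by simp
  qed
  show ?thesis
  proof (cases "a \<le> b")
    case True thus ?thesis using key assms by blast
  next
    case False thus ?thesis using key[of b a] assms by simp
  qed
qed

lemma card_bound:
  fixes q :: nat and f :: "nat \<times> nat \<Rightarrow> nat" and C :: "nat set"
  defines "V \<equiv> cart_vertices (K_vertices 6) (K_vertices q)"
  defines "E \<equiv> cart_edges (K_vertices 6) (K_edges 6) (K_vertices q) (K_edges q)"
  assumes fin: "finite C" and pr: "proper_colouring V E f C" and co: "complete_colouring V E f C"
  shows "card C \<le> 2*q+7"
proof (rule ccontr)
  assume "\<not> card C \<le> 2*q+7"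
  hence big: "card C \<ge> 2*q+8" by simp
  have cls: "3 \<le> card {v\<in>V. f v = c}" if "c \<in> C" for c
    using class_bound[OF fin _ _ big that] pr co unfolding V_def E_def by blast
  have finV: "finite V" unfolding V_def cart_vertices_def K_vertices_def by simp
  have cV: "card V = 6*q" unfolding V_def cart_vertices_def K_vertices_def
    by (simp add: card_cartesian_product)
  have Veq: "V = (\<Union>c\<in>C. {v\<in>V. f v = c})" using pr unfolding proper_colouring_def by blast
  have "card (\<Union>c\<in>C. {v\<in>V. f v = c}) = (\<Sum>c\<in>C. card {v\<in>V. f v = c})"
    by (rule card_UN_disjoint) (use fin finV in auto)
  hence "card V = (\<Sum>c\<in>C. card {v\<in>V. f v = c})" using Veq by simp
  moreover have "(\<Sum>c\<in>C. card {v\<in>V. f v = c}) \<ge> (\<Sum>c\<in>C. 3)"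
    by (rule sum_mono) (use cls in auto)
  ultimately have "6*q \<ge> 3 * card C" using cV by simp
  thus False using big by simp
qed

theorem corollary1:
  fixes q :: nat
  assumes "q \<ge> 7"
  shows "achromatic_number (cart_vertices (K_vertices 6) (K_vertices q))
           (cart_edges (K_vertices 6) (K_edges 6) (K_vertices q) (K_edges q)) \<le> 2 * q + 7"
proof -
  let ?V = "cart_vertices (K_vertices 6) (K_vertices q)"
  let ?E = "cart_edges (K_vertices 6) (K_edges 6) (K_vertices q) (K_edges q)"
  let ?P = "\<lambda>k. \<exists>(f :: nat \<times> nat \<Rightarrow> nat) C. finite C \<and> card C = k \<and>
       proper_colouring ?V ?E f C \<and> complete_colouring ?V ?E f C"
  have bnd: "y \<le> 2*q+7" if Py: "?P y" for y
  proof -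
    obtain f :: "nat \<times> nat \<Rightarrow> nat" and C :: "nat set" where H: "finite C \<and> card C = y \<and> proper_colouring ?V ?E f C \<and> complete_colouring ?V ?E f C"
      using Py by auto
    have "card C \<le> 2*q+7"
      by (rule card_bound) (use H in blast)+
    thus ?thesis using H by simp
  qed
  define g where "g = (\<lambda>(i::nat, j::nat). (i + j) mod q)"
  have pc: "proper_colouring ?V ?E g {0..<q}"
    unfolding proper_colouring_def
  proof (intro conjI ballI impI)
    show "g ` ?V \<subseteq> {0..<q}" using assms by (auto simp: g_def)
    fix u v assume "u \<in> ?V" "v \<in> ?V" "{u,v} \<in> ?E"
    obtain a1 a2 b1 b2 where uv: "u = (a1,a2)" "v = (b1,b2)" by (cases u, cases v) 
    have h: "a1<6" "b1<6" "a2<q" "b2<q"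
        "(a1\<noteq>b1 \<and> a2=b2) \<or> (a2\<noteq>b2 \<and> a1=b1)"
      using \<open>{u,v} \<in> ?E\<close> unfolding uv edge_char by blast+
    show "g u \<noteq> g v"
    proof
      assume "g u = g v"
      hence e: "(a1 + a2) mod q = (b1 + b2) mod q" by (simp add: g_def uv)
      have q6: "a1 < q" "b1 < q" using h assms by simp_all
      from h(5) show False
      proof
        assume A: "a1\<noteq>b1 \<and> a2=b2"
        hence "a1 = b1" using mod_cancel_aux[of a1 q b1 a2] q6 e by simp
        thus False using A by simp
      next
        assume A: "a2\<noteq>b2 \<and> a1=b1"
        hence "a2 = b2" using mod_cancel_aux[of a2 q b2 a1] h e by (simp add: add.commute)
        thus False using A by simp
      qed
    qed
  qed
  have cc: "complete_colouring ?V ?E g {0..<q}"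
      unfolding complete_colouring_def
    proof (intro conjI ballI impI)
      show "g ` ?V \<subseteq> {0..<q}" using assms by (auto simp: g_def)
      fix c1 c2 assume c: "c1 \<in> {0..<q}" "c2 \<in> {0..<q}" "c1 \<noteq> c2"
      show "\<exists>v1\<in>?V. \<exists>v2\<in>?V. {v1,v2} \<in> ?E \<and> g v1 = c1 \<and> g v2 = c2"
      proof (rule bexI[of _ "(0,c1)"], rule bexI[of _ "(0,c2)"])
        have "{(0::nat,c1),(0,c2)} \<in> ?E" unfolding edge_char using c by simp
        thus "{(0,c1),(0,c2)} \<in> ?E \<and> g (0,c1) = c1 \<and> g (0,c2) = c2" using c by (simp add: g_def)
        show "(0,c2) \<in> ?V" "(0,c1) \<in> ?V" using c by (auto simp: cart_vertices_def K_vertices_def)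
      qed
    qed
  have w: "?P q"
    apply (rule exI[of _ g], rule exI[of _ "{0..<q}"])
    using pc cc by simp
  have "?P (Greatest ?P)" by (rule GreatestI_nat[where P = ?P, OF w bnd])
  hence "Greatest ?P \<le> 2*q+7" by (rule bnd)
  thus ?thesis unfolding achromatic_number_def .
qed

end
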